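(* Let $G$ be a Tanner graph and $S$ a stopping set in $G$, and let $t_S$ denote the largest component that an irreducible lift-realizable pseudocodeword of $G$ with support $S$ may have. If $S$ is a minimal stopping set and does not have property $\Theta$, then every pseudocodeword with support $S$ has maximal component 1 or 2; that is, $t_S=1$ or $t_S=2$.
   Context: A Tanner graph $G$ is a finite bipartite graph with variable nodes $v_1,\dots,v_n$ and check nodes; its code consists of all $x\in\{0,1\}^n$ with every check node having an even number of neighbours $v_i$ with $x_i=1$. A degree-$\ell$ lift replaces each node by $\ell$ copies and each edge by a perfect matching between copy-sets; a lift-realizable pseudocodeword $p\in\mathbb{Z}_{\ge0}^n$ is obtained from a codeword of the code of a finite lift by letting $p_i$ be the number of copies of $v_i$ assigned 1; its support is $\{v_i:p_i\ne0\}$; it is irreducible if it is not a sum of two or more nonzero codewords/pseudocodewords. A stopping set is a nonempty set $S$ of variable nodes such that every check node adjacent to $S$ is adjacent to at least two nodes of $S$; it is minimal if it contains no strictly smaller nonempty stopping set. $G_{|_S}$ is the subgraph induced by $S$ and its neighbouring check nodes. $S$ has property $\Theta$ if it contains a pair of variable nodes not joined by any path in $G_{|_S}$ passing only through check nodes of degree two. *)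

theory Defs
  imports Main
begin

definition tanner_graph :: "'v set \<Rightarrow> 'c set \<Rightarrow> ('v \<times> 'c) set \<Rightarrow> bool" where
  "tanner_graph V C E \<longleftrightarrow> finite V \<and> finite C \<and> E \<subseteq> V \<times> C"

text \<open>A degree-l lift: node v becomes copies (v,i), i<l; edge e=(v,c) becomes the perfect
  matching (v,i) -- (c, pi e i), with pi e a bijection of {..<l}.\<close>
definition lift_codeword ::
  "'c set \<Rightarrow> ('v \<times> 'c) set \<Rightarrow> nat \<Rightarrow> ('v \<times> 'c \<Rightarrow> nat \<Rightarrow> nat) \<Rightarrow> ('v \<times> nat \<Rightarrow> bool) \<Rightarrow> bool" where
  "lift_codeword C E l pi x \<longleftrightarrow>
     (\<forall>c\<in>C. \<forall>j<l. even (card {(v, i). (v, c) \<in> E \<and> i < l \<and> pi (v, c) i = j \<and> x (v, i)}))"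

definition lift_realizable :: "'v set \<Rightarrow> 'c set \<Rightarrow> ('v \<times> 'c) set \<Rightarrow> ('v \<Rightarrow> nat) \<Rightarrow> bool" where
  "lift_realizable V C E p \<longleftrightarrow>
     (\<exists>l pi x. l \<ge> 1 \<and> (\<forall>e\<in>E. bij_betw (pi e) {..<l} {..<l}) \<and>
        lift_codeword C E l pi x \<and>
        (\<forall>v. p v = (if v \<in> V then card {i. i < l \<and> x (v, i)} else 0)))"

definition support :: "'v set \<Rightarrow> ('v \<Rightarrow> nat) \<Rightarrow> 'v set" where
  "support V p = {v \<in> V. p v \<noteq> 0}"

definition irreducible_pcw :: "'v set \<Rightarrow> 'c set \<Rightarrow> ('v \<times> 'c) set \<Rightarrow> ('v \<Rightarrow> nat) \<Rightarrow> bool" where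
  "irreducible_pcw V C E p \<longleftrightarrow>
     lift_realizable V C E p \<and> p \<noteq> (\<lambda>_. 0) \<and>
     \<not> (\<exists>ps. length ps \<ge> 2 \<and>
            (\<forall>q\<in>set ps. lift_realizable V C E q \<and> q \<noteq> (\<lambda>_. 0)) \<and>
            p = (\<lambda>v. sum_list (map (\<lambda>q. q v) ps)))"

definition stopping_set :: "'v set \<Rightarrow> 'c set \<Rightarrow> ('v \<times> 'c) set \<Rightarrow> 'v set \<Rightarrow> bool" where
  "stopping_set V C E S \<longleftrightarrow> S \<noteq> {} \<and> S \<subseteq> V \<and>
     (\<forall>c\<in>C. (\<exists>v\<in>S. (v, c) \<in> E) \<longrightarrow> card {v \<in> S. (v, c) \<in> E} \<ge> 2)"

definition minimal_stopping_set :: "'v set \<Rightarrow> 'c set \<Rightarrow> ('v \<times> 'c) set \<Rightarrow> 'v set \<Rightarrow> bool" where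
  "minimal_stopping_set V C E S \<longleftrightarrow> stopping_set V C E S \<and>
     (\<forall>T. T \<subset> S \<longrightarrow> \<not> stopping_set V C E T)"

definition deg2_step :: "'c set \<Rightarrow> ('v \<times> 'c) set \<Rightarrow> 'v set \<Rightarrow> ('v \<times> 'v) set" where
  "deg2_step C E S = {(u, w). u \<in> S \<and> w \<in> S \<and>
     (\<exists>c\<in>C. (u, c) \<in> E \<and> (w, c) \<in> E \<and> card {v \<in> S. (v, c) \<in> E} = 2)}"

definition property_Theta :: "'c set \<Rightarrow> ('v \<times> 'c) set \<Rightarrow> 'v set \<Rightarrow> bool" where
  "property_Theta C E S \<longleftrightarrow>
     (\<exists>u\<in>S. \<exists>w\<in>S. u \<noteq> w \<and> (u, w) \<notin> (deg2_step C E S)\<^sup>*)"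

definition max_components :: "'v set \<Rightarrow> 'c set \<Rightarrow> ('v \<times> 'c) set \<Rightarrow> 'v set \<Rightarrow> nat set" where
  "max_components V C E S =
     {Max (p ` V) | p. irreducible_pcw V C E p \<and> support V p = S}"

definition t_S :: "'v set \<Rightarrow> 'c set \<Rightarrow> ('v \<times> 'c) set \<Rightarrow> 'v set \<Rightarrow> nat" where
  "t_S V C E S = Max (max_components V C E S)"

end

theory Submission
  imports Defs
begin

lemma lr_obtain:
  assumes "lift_realizable V C E q"
  obtains l pi x where "l \<ge> 1" "\<forall>e\<in>E. bij_betw (pi e) {..<l} {..<l}"
    "lift_codeword C E l pi x" "\<forall>v. q v = (if v \<in> V then card {i. i < l \<and> x (v, i)} else 0)"
  using assms unfolding lift_realizable_def by blast

lemma copy_other: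
  assumes tg: "tanner_graph V C E" and bij: "\<forall>e\<in>E. bij_betw (pi e) {..<l} {..<l}"
    and cw: "lift_codeword C E l pi x" and c: "c \<in> C" and vc: "(v, c) \<in> E"
    and i: "i < l" "x (v, i)"
  shows "\<exists>w i'. w \<noteq> v \<and> (w, c) \<in> E \<and> i' < l \<and> pi (w, c) i' = pi (v, c) i \<and> x (w, i')"
proof -
  define j where "j = pi (v, c) i"
  have jl: "j < l" using bij vc i unfolding j_def bij_betw_def by auto
  define A where "A = {(w, i'). (w, c) \<in> E \<and> i' < l \<and> pi (w, c) i' = j \<and> x (w, i')}"
  have ev: "even (card A)" using cw c jl unfolding lift_codeword_def A_def by blast
  have "A \<subseteq> V \<times> {..<l}" using tg unfolding A_def tanner_graph_def by auto
  moreover have "finite V" using tg unfolding tanner_graph_def by auto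
  ultimately have fin: "finite A" by (meson finite_SigmaI finite_lessThan finite_subset)
  have vi: "(v, i) \<in> A" using vc i unfolding A_def j_def by auto
  have "A \<noteq> {(v, i)}" using ev by auto
  then obtain z where "z \<in> A" "z \<noteq> (v, i)" using vi by blast
  then obtain w i' where wi: "(w, i') \<in> A" "(w, i') \<noteq> (v, i)" by (cases z) auto
  have "w \<noteq> v"
  proof
    assume "w = v"
    then have "pi (v, c) i' = pi (v, c) i" "i' < l" using wi unfolding A_def j_def by auto
    moreover have "inj_on (pi (v, c)) {..<l}" using bij vc unfolding bij_betw_def by auto
    ultimately have "i' = i" using i by (meson inj_onD lessThan_iff)
    then show False using wi \<open>w = v\<close> by auto
  qed
  then show ?thesis using wi unfolding A_def j_def by auto
qed

lemma support_stopping: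
  assumes tg: "tanner_graph V C E" and lr: "lift_realizable V C E q" and nz: "q \<noteq> (\<lambda>_. 0)"
  shows "stopping_set V C E (support V q)"
proof -
  obtain l pi x where l: "l \<ge> 1" and bij: "\<forall>e\<in>E. bij_betw (pi e) {..<l} {..<l}"
    and cw: "lift_codeword C E l pi x" and qv: "\<forall>v. q v = (if v \<in> V then card {i. i < l \<and> x (v, i)} else 0)"
    using lr_obtain[OF lr] by blast
  have finV: "finite V" and EV: "E \<subseteq> V \<times> C" using tg unfolding tanner_graph_def by auto
  obtain v where "q v \<noteq> 0" using nz by auto
  then have "v \<in> V" using qv by (metis)
  then have ne: "support V q \<noteq> {}" using \<open>q v \<noteq> 0\<close> unfolding support_def by auto
  have "\<forall>c\<in>C. (\<exists>v\<in>support V q. (v, c) \<in> E) \<longrightarrow> card {v \<in> support V q. (v, c) \<in> E} \<ge> 2"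
  proof (intro ballI impI)
    fix c assume c: "c \<in> C" and "\<exists>v\<in>support V q. (v, c) \<in> E"
    then obtain v where v: "v \<in> V" "q v \<noteq> 0" "(v, c) \<in> E" unfolding support_def by auto
    then have "{i. i < l \<and> x (v, i)} \<noteq> {}" using qv by (metis card.empty)
    then obtain i where i: "i < l" "x (v, i)" by auto
    obtain w i' where w: "w \<noteq> v" "(w, c) \<in> E" "i' < l" "x (w, i')"
      using copy_other[OF tg bij cw c v(3) i] by blast
    have wV: "w \<in> V" using w EV by auto
    have "card {i. i < l \<and> x (w, i)} \<noteq> 0" using w by auto
    then have "q w \<noteq> 0" using qv wV by auto
    then have "{v, w} \<subseteq> {v \<in> support V q. (v, c) \<in> E}" using v w wV unfolding support_def by auto
    moreover have "finite {v \<in> support V q. (v, c) \<in> E}" using finV unfolding support_def by auto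
    ultimately have "card {v, w} \<le> card {v \<in> support V q. (v, c) \<in> E}" by (rule card_mono[rotated])
    then show "card {v \<in> support V q. (v, c) \<in> E} \<ge> 2" using w(1) by auto
  qed
  then show ?thesis using ne unfolding stopping_set_def support_def by auto
qed

lemma deg2_le:
  assumes tg: "tanner_graph V C E" and lr: "lift_realizable V C E q"
    and sub: "support V q \<subseteq> T" and uw: "(u, w) \<in> deg2_step C E T"
  shows "q u \<le> q w"
proof (cases "u = w")
  case True then show ?thesis by simp
next
  case False
  obtain l pi x where l: "l \<ge> 1" and bij: "\<forall>e\<in>E. bij_betw (pi e) {..<l} {..<l}"
    and cw: "lift_codeword C E l pi x" and qv: "\<forall>v. q v = (if v \<in> V then card {i. i < l \<and> x (v, i)} else 0)"
    using lr_obtain[OF lr] by blast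
  have finV: "finite V" and EV: "E \<subseteq> V \<times> C" using tg unfolding tanner_graph_def by auto
  obtain c where c: "c \<in> C" "(u, c) \<in> E" "(w, c) \<in> E" "card {v \<in> T. (v, c) \<in> E} = 2"
    and uT: "u \<in> T" and wT: "w \<in> T"
    using uw unfolding deg2_step_def by blast
  have uV: "u \<in> V" and wV: "w \<in> V" using c EV by auto
  have fin2: "finite {v \<in> T. (v, c) \<in> E}" using c(4) by (intro card_ge_0_finite) simp
  have sub2: "{u, w} \<subseteq> {v \<in> T. (v, c) \<in> E}" using c uT wT by auto
  have "card {u, w} = 2" using False by auto
  then have N: "{v \<in> T. (v, c) \<in> E} = {u, w}" using card_subset_eq[OF fin2 sub2] c(4)
    by simp
  define Iu where "Iu = {i. i < l \<and> x (u, i)}"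
  define Iw where "Iw = {i. i < l \<and> x (w, i)}"
  define f where "f i = inv_into {..<l} (pi (w, c)) (pi (u, c) i)" for i
  have bu: "bij_betw (pi (u, c)) {..<l} {..<l}" and bw: "bij_betw (pi (w, c)) {..<l} {..<l}"
    using bij c by auto
  have fimg: "f i \<in> Iw" if "i \<in> Iu" for i
  proof -
    have i: "i < l" "x (u, i)" using that unfolding Iu_def by auto
    obtain w' i' where w': "w' \<noteq> u" "(w', c) \<in> E" "i' < l" "pi (w', c) i' = pi (u, c) i" "x (w', i')"
      using copy_other[OF tg bij cw c(1) c(2) i] by blast
    have w'V: "w' \<in> V" using w' EV by auto
    have "card {i. i < l \<and> x (w', i)} \<noteq> 0" using w' by auto
    then have "q w' \<noteq> 0" using qv w'V by auto
    then have "w' \<in> T" using sub w'V unfolding support_def by auto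
    then have "w' = w" using N w' by auto
    have injw: "inj_on (pi (w, c)) {..<l}" using bw unfolding bij_betw_def by auto
    have "f i = inv_into {..<l} (pi (w, c)) (pi (w, c) i')"
      unfolding f_def using w'(4) \<open>w' = w\<close> by simp
    then have "f i = i'" using inv_into_f_f[OF injw] w'(3) by simp
    then show ?thesis using w' \<open>w' = w\<close> unfolding Iw_def by auto
  qed
  have finj: "inj_on f Iu"
  proof
    fix i1 i2 assume "i1 \<in> Iu" "i2 \<in> Iu" "f i1 = f i2"
    then have i: "i1 < l" "i2 < l" unfolding Iu_def by auto
    have "pi (u, c) i1 \<in> pi (w, c) ` {..<l}" "pi (u, c) i2 \<in> pi (w, c) ` {..<l}"
      using bu bw i unfolding bij_betw_def by auto
    then have "pi (w, c) (f i1) = pi (u, c) i1" "pi (w, c) (f i2) = pi (u, c) i2"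
      unfolding f_def by (simp_all add: f_inv_into_f)
    then have "pi (u, c) i1 = pi (u, c) i2" using \<open>f i1 = f i2\<close> by simp
    then show "i1 = i2" using bu i unfolding bij_betw_def by (meson inj_onD lessThan_iff)
  qed
  have "f ` Iu \<subseteq> Iw" using fimg by auto
  moreover have "finite Iw" unfolding Iw_def by auto
  ultimately have "card Iu \<le> card Iw"
    using card_inj_on_le[OF finj] by blast
  then show ?thesis using qv uV wV unfolding Iu_def Iw_def by auto
qed

lemma const_on_S:
  assumes tg: "tanner_graph V C E" and lr: "lift_realizable V C E q"
    and sub: "support V q \<subseteq> S" and nt: "\<not> property_Theta C E S"
    and u: "u \<in> S" and w: "w \<in> S"
  shows "q u = q w"
proof -
  have sym: "(b, a) \<in> deg2_step C E S" if "(a, b) \<in> deg2_step C E S" for a b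
    using that unfolding deg2_step_def by auto
  have le: "q a \<le> q b" if "(a, b) \<in> (deg2_step C E S)\<^sup>*" for a b
    using that
  proof (induct rule: rtrancl_induct)
    case base then show ?case by simp
  next
    case (step y z)
    have "q y \<le> q z" using deg2_le[OF tg lr sub step(2)] .
    then show ?case using step(3) by simp
  qed
  have "(u, w) \<in> (deg2_step C E S)\<^sup>*" "(w, u) \<in> (deg2_step C E S)\<^sup>*"
    using nt u w unfolding property_Theta_def by auto
  then show ?thesis using le by (meson antisym)
qed

lemma even_partition:
  fixes g :: "'a \<Rightarrow> nat"
  assumes fin: "finite B" and g: "\<forall>b\<in>B. g b < l" and ev: "\<forall>j<l. even (card {b\<in>B. g b = j})"
  shows "even (card B)"
proof -
  have "n \<le> l \<Longrightarrow> even (card {b\<in>B. g b < n})" for n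
  proof (induction n)
    case 0 then show ?case by simp
  next
    case (Suc n)
    have "{b\<in>B. g b < Suc n} = {b\<in>B. g b < n} \<union> {b\<in>B. g b = n}" by auto
    moreover have "card ({b\<in>B. g b < n} \<union> {b\<in>B. g b = n}) = card {b\<in>B. g b < n} + card {b\<in>B. g b = n}"
      by (rule card_Un_disjoint) (use fin in auto)
    moreover have "even (card {b\<in>B. g b = n})" using ev Suc.prems by auto
    ultimately show ?case using Suc by simp
  qed
  moreover have "{b\<in>B. g b < l} = B" using g by auto
  ultimately show ?thesis by (metis order_refl)
qed

lemma parity:
  assumes tg: "tanner_graph V C E" and lr: "lift_realizable V C E q"
    and sub: "support V q \<subseteq> S" and SV: "S \<subseteq> V" and const: "\<forall>u\<in>S. q u = k"
    and c: "c \<in> C" and odd: "odd (card {v\<in>S. (v, c) \<in> E})"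
  shows "even k"
proof -
  obtain l pi x where l: "l \<ge> 1" and bij: "\<forall>e\<in>E. bij_betw (pi e) {..<l} {..<l}"
    and cw: "lift_codeword C E l pi x" and qv: "\<forall>v. q v = (if v \<in> V then card {i. i < l \<and> x (v, i)} else 0)"
    using lr_obtain[OF lr] by blast
  have finV: "finite V" and EV: "E \<subseteq> V \<times> C" using tg unfolding tanner_graph_def by auto
  define N where "N = {v\<in>S. (v, c) \<in> E}"
  have finN: "finite N" using finite_subset[OF SV finV] unfolding N_def by simp
  define B where "B = {(v, i). (v, c) \<in> E \<and> i < l \<and> x (v, i)}"
  have BS: "B = Sigma N (\<lambda>v. {i. i < l \<and> x (v, i)})"
  proof (intro equalityI subsetI)
    fix b assume "b \<in> B"
    then obtain v i where b: "b = (v, i)" "(v, c) \<in> E" "i < l" "x (v, i)" unfolding B_def by auto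
    have vV: "v \<in> V" using b EV by auto
    have "card {i. i < l \<and> x (v, i)} \<noteq> 0" using b by auto
    then have "q v \<noteq> 0" using qv vV by auto
    then have "v \<in> S" using sub vV unfolding support_def by auto
    then show "b \<in> Sigma N (\<lambda>v. {i. i < l \<and> x (v, i)})" using b unfolding N_def by auto
  next
    fix b assume "b \<in> Sigma N (\<lambda>v. {i. i < l \<and> x (v, i)})"
    then show "b \<in> B" unfolding N_def B_def by auto
  qed
  have "card B = (\<Sum>v\<in>N. card {i. i < l \<and> x (v, i)})"
    unfolding BS by (rule card_SigmaI) (use finN in auto)
  also have "\<dots> = (\<Sum>v\<in>N. k)"
  proof (rule sum.cong)
    fix v assume "v \<in> N"
    then have vS: "v \<in> S" "v \<in> V" using SV unfolding N_def by auto
    then have "q v = k" using const by auto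
    then show "card {i. i < l \<and> x (v, i)} = k" using qv vS by metis
  qed simp
  also have "\<dots> = card N * k" by simp
  finally have cB: "card B = card N * k" .
  have finB: "finite B" unfolding BS using finN by auto
  have "even (card B)"
  proof (rule even_partition[OF finB, of "\<lambda>(v, i). pi (v, c) i" l])
    show "\<forall>b\<in>B. (case b of (v, i) \<Rightarrow> pi (v, c) i) < l"
      using bij unfolding B_def bij_betw_def by auto
    show "\<forall>j<l. even (card {b \<in> B. (case b of (v, i) \<Rightarrow> pi (v, c) i) = j})"
    proof (intro allI impI)
      fix j assume j: "j < l"
      have "{b \<in> B. (case b of (v, i) \<Rightarrow> pi (v, c) i) = j} =
            {(v, i). (v, c) \<in> E \<and> i < l \<and> pi (v, c) i = j \<and> x (v, i)}"
        unfolding B_def by auto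
      then show "even (card {b \<in> B. (case b of (v, i) \<Rightarrow> pi (v, c) i) = j})"
        using cw c j unfolding lift_codeword_def by simp
    qed
  qed
  then show ?thesis using cB odd unfolding N_def by simp
qed

lemma real_even_const:
  assumes tg: "tanner_graph V C E" and SV: "S \<subseteq> V"
    and ev: "\<forall>c\<in>C. even (card {v\<in>S. (v, c) \<in> E})" and m: "m \<ge> 1"
  shows "lift_realizable V C E (\<lambda>v. if v \<in> S then m else 0)"
  unfolding lift_realizable_def
proof (intro exI conjI)
  show "m \<ge> 1" by fact
  show "\<forall>e\<in>E. bij_betw ((\<lambda>e i. i) e) {..<m} {..<m}" by (simp add: bij_betw_def)
  show "lift_codeword C E m (\<lambda>e i. i) (\<lambda>(v, i). v \<in> S)"
    unfolding lift_codeword_def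
  proof (intro ballI allI impI)
    fix c j assume c: "c \<in> C" and j: "j < m"
    have "{(v, i). (v, c) \<in> E \<and> i < m \<and> i = j \<and> (case (v, i) of (v, i) \<Rightarrow> v \<in> S)}
        = (\<lambda>v. (v, j)) ` {v\<in>S. (v, c) \<in> E}" using j by auto
    moreover have "card ((\<lambda>v. (v, j)) ` {v\<in>S. (v, c) \<in> E}) = card {v\<in>S. (v, c) \<in> E}"
      by (rule card_image) (auto simp: inj_on_def)
    ultimately show "even (card {(v, i). (v, c) \<in> E \<and> i < m \<and> i = j \<and> (case (v, i) of (v, i) \<Rightarrow> v \<in> S)})"
      using ev c by simp
  qed
  show "\<forall>v. (if v \<in> S then m else 0) = (if v \<in> V then card {i. i < m \<and> (case (v, i) of (v, i) \<Rightarrow> v \<in> S)} else 0)"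
    using SV by auto
qed

definition P3 :: "nat \<Rightarrow> nat \<Rightarrow> nat" where
  "P3 h r = (if h = 2 then r else if h = 0 then (r + 1) mod 3 else (if r = 0 then 0 else 3 - r))"

lemma three_cases: "(r::nat) < 3 \<Longrightarrow> r = 0 \<or> r = 1 \<or> r = 2" by auto

lemma P3_lt: "r < 3 \<Longrightarrow> P3 h r < 3"
  using three_cases[of r] by (auto simp: P3_def)

lemma P3_inj: "h < 3 \<Longrightarrow> r < 3 \<Longrightarrow> r' < 3 \<Longrightarrow> P3 h r = P3 h r' \<Longrightarrow> r = r'"
  using three_cases[of r] three_cases[of r'] three_cases[of h] by (auto simp: P3_def)

lemma P3_hit:
  assumes "h < 3" "s < 3" "s \<noteq> h"
  shows "\<exists>r<2. P3 h r = s"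
proof -
  have *: "P3 h 0 = s \<or> P3 h 1 = s"
    using three_cases[of s] three_cases[of h] assms by (auto simp: P3_def)
  show ?thesis
  proof (cases "P3 h 0 = s")
    case True then show ?thesis by (intro exI[of _ 0]) simp
  next
    case False then show ?thesis using * by (intro exI[of _ 1]) simp
  qed
qed

lemma P3_miss: "h < 3 \<Longrightarrow> r < 2 \<Longrightarrow> P3 h r \<noteq> h"
  using three_cases[of h] by (auto simp: P3_def less_2_cases_iff)

lemma card_mod3: "card {i. i < 3 * m \<and> i mod 3 < (2::nat)} = 2 * m"
proof (induction m)
  case 0 then show ?case by simp
next
  case (Suc m)
  have "{i. i < 3 * Suc m \<and> i mod 3 < (2::nat)} = insert (3*m) (insert (3*m+1) {i. i < 3 * m \<and> i mod 3 < 2})"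
  proof (intro equalityI subsetI)
    fix x assume x: "x \<in> {i. i < 3 * Suc m \<and> i mod 3 < (2::nat)}"
    show "x \<in> insert (3*m) (insert (3*m+1) {i. i < 3 * m \<and> i mod 3 < 2})"
    proof (cases "x < 3 * m")
      case True then show ?thesis using x by simp
    next
      case False
      then have "x = 3*m \<or> x = 3*m+1 \<or> x = 3*m+2" using x by auto
      moreover have "(3*m+2) mod 3 = (2::nat)" by presburger
      ultimately show ?thesis using x by auto
    qed
  next
    fix x assume "x \<in> insert (3*m) (insert (3*m+1) {i. i < 3 * m \<and> i mod 3 < (2::nat)})"
    moreover have "(3*m) mod 3 = (0::nat)" "(3*m+1) mod 3 = (1::nat)" by simp_all
    ultimately show "x \<in> {i. i < 3 * Suc m \<and> i mod 3 < (2::nat)}" by auto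
  qed
  then show ?case using Suc by simp
qed

lemma blk_div: "b < 3 \<Longrightarrow> (3 * a + b) div 3 = (a::nat)" by simp
lemma blk_mod: "b < 3 \<Longrightarrow> (3 * a + b) mod 3 = (b::nat)" by simp

lemma blk_inj:
  assumes h: "h < 3" and eq: "3 * (i div 3) + P3 h (i mod 3) = 3 * (i' div 3) + P3 h (i' mod 3)"
  shows "i = (i'::nat)"
proof -
  have l1: "P3 h (i mod 3) < 3" "P3 h (i' mod 3) < 3" by (simp_all add: P3_lt)
  have "i div 3 = i' div 3" using eq blk_div[OF l1(1), of "i div 3"] blk_div[OF l1(2), of "i' div 3"] by simp
  moreover have "P3 h (i mod 3) = P3 h (i' mod 3)"
    using eq blk_mod[OF l1(1), of "i div 3"] blk_mod[OF l1(2), of "i' div 3"] by simp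
  then have "i mod 3 = i' mod 3" using P3_inj[OF h] by simp
  ultimately show ?thesis by (metis div_mult_mod_eq)
qed

lemma blk_bij:
  assumes h: "h < 3"
  shows "bij_betw (\<lambda>i. 3 * (i div 3) + P3 h (i mod 3)) {..<3 * m} {..<3 * m}"
proof -
  let ?f = "\<lambda>i. 3 * (i div 3) + P3 h (i mod 3)"
  have inj: "inj_on ?f {..<3 * m}" by (rule inj_onI) (use blk_inj[OF h] in blast)
  have "?f ` {..<3 * m} \<subseteq> {..<3 * m}"
  proof
    fix y assume "y \<in> ?f ` {..<3 * m}"
    then obtain i where i: "i < 3 * m" "y = ?f i" by auto
    have "i div 3 < m" using i by auto
    then have "3 * (i div 3) + 3 \<le> 3 * m" by linarith
    moreover have "P3 h (i mod 3) < 3" by (simp add: P3_lt)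
    ultimately show "y \<in> {..<3 * m}" using i by simp
  qed
  then have "?f ` {..<3 * m} = {..<3 * m}" using endo_inj_surj[OF _ _ inj] by simp
  then show ?thesis using inj unfolding bij_betw_def by simp
qed

lemma blk_count:
  assumes H: "\<forall>v. H v < 3" and j: "j < 3 * m"
  shows "card {(v, i). v \<in> M \<and> i < 3 * m \<and> 3 * (i div 3) + P3 (H v) (i mod 3) = j \<and> i mod 3 < 2}
       = card {v \<in> M. H v \<noteq> j mod 3}"
proof -
  define A where "A = {(v, i). v \<in> M \<and> i < 3 * m \<and> 3 * (i div 3) + P3 (H v) (i mod 3) = j \<and> i mod 3 < 2}"
  have inj: "inj_on fst A"
  proof (rule inj_onI)
    fix p p' assume "p \<in> A" "p' \<in> A" "fst p = fst p'"
    then obtain v i i' where "p = (v, i)" "p' = (v, i')"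
      "3 * (i div 3) + P3 (H v) (i mod 3) = 3 * (i' div 3) + P3 (H v) (i' mod 3)"
      unfolding A_def by auto
    then show "p = p'" using blk_inj[OF H[rule_format]] by blast
  qed
  have img: "fst ` A = {v \<in> M. H v \<noteq> j mod 3}"
  proof (intro equalityI subsetI)
    fix v assume "v \<in> fst ` A"
    then obtain i where vi: "v \<in> M" "3 * (i div 3) + P3 (H v) (i mod 3) = j" "i mod 3 < 2"
      unfolding A_def by auto
    have lt: "P3 (H v) (i mod 3) < 3" by (simp add: P3_lt)
    have "j mod 3 = (3 * (i div 3) + P3 (H v) (i mod 3)) mod 3" by (simp only: vi(2))
    also have "\<dots> = P3 (H v) (i mod 3)" by (rule blk_mod[OF lt])
    finally have "j mod 3 = P3 (H v) (i mod 3)" .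
    moreover have "P3 (H v) (i mod 3) \<noteq> H v" by (rule P3_miss[OF H[rule_format] vi(3)])
    ultimately show "v \<in> {v \<in> M. H v \<noteq> j mod 3}" using vi(1) by simp
  next
    fix v assume v: "v \<in> {v \<in> M. H v \<noteq> j mod 3}"
    obtain r where r: "r < 2" "P3 (H v) r = j mod 3" using P3_hit[OF H[rule_format], of "j mod 3" v] v by auto
    define i where "i = 3 * (j div 3) + r"
    have idm: "i div 3 = j div 3" "i mod 3 = r" unfolding i_def using r by simp_all
    have "j div 3 < m" using j by auto
    then have "i < 3 * m" unfolding i_def using r by linarith
    moreover have "3 * (i div 3) + P3 (H v) (i mod 3) = j" using idm r by simp
    ultimately have "(v, i) \<in> A" unfolding A_def using v idm r by auto
    then show "v \<in> fst ` A" by force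
  qed
  show ?thesis using card_image[OF inj] img unfolding A_def by simp
qed

lemma two_elems:
  assumes "finite A" "card A \<ge> 2"
  shows "\<exists>a b. a \<in> A \<and> b \<in> A \<and> a \<noteq> b"
proof -
  obtain a where a: "a \<in> A" using assms by fastforce
  have "card (A - {a}) \<ge> 1" using assms a by simp
  then have "A - {a} \<noteq> {}" by (metis card.empty not_one_le_zero)
  then obtain b where "b \<in> A - {a}" by blast
  then show ?thesis using a by blast
qed

lemma real_two:
  assumes tg: "tanner_graph V C E" and st: "stopping_set V C E S" and m: "m \<ge> 1"
  shows "lift_realizable V C E (\<lambda>v. if v \<in> S then 2 * m else 0)"
proof -
  have finV: "finite V" and EV: "E \<subseteq> V \<times> C" using tg unfolding tanner_graph_def by auto
  have SV: "S \<subseteq> V" using st unfolding stopping_set_def by auto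
  define N where "N c = {v\<in>S. (v, c) \<in> E}" for c
  have finN: "finite (N c)" for c using finite_subset[OF SV finV] unfolding N_def by simp
  have ex2: "\<exists>p. fst p \<in> N c \<and> snd p \<in> N c \<and> fst p \<noteq> snd p" if "odd (card (N c))" for c
  proof -
    have "N c \<noteq> {}" using that by auto
    then obtain v where v: "v \<in> S" "(v, c) \<in> E" unfolding N_def by auto
    then have "c \<in> C" using EV by auto
    then have "card (N c) \<ge> 2" using st v unfolding stopping_set_def N_def by blast
    then obtain a b where "a \<in> N c" "b \<in> N c" "a \<noteq> b" using two_elems[OF finN] by blast
    then show ?thesis by (intro exI[of _ "(a, b)"]) simp
  qed
  define ab where "ab c = (SOME p. fst p \<in> N c \<and> snd p \<in> N c \<and> fst p \<noteq> snd p)" for c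
  have abp: "fst (ab c) \<in> N c \<and> snd (ab c) \<in> N c \<and> fst (ab c) \<noteq> snd (ab c)" if "odd (card (N c))" for c
    unfolding ab_def using someI_ex[OF ex2[OF that]] .
  define hole where "hole v c = (if odd (card (N c)) \<and> v = fst (ab c) then 0
     else if odd (card (N c)) \<and> v = snd (ab c) then 1 else (2::nat))" for v c
  have h3: "\<forall>v. hole v c < 3" for c unfolding hole_def by auto
  define pi where "pi e i = 3 * (i div 3) + P3 (hole (fst e) (snd e)) (i mod 3)" for e i
  define x where "x = (\<lambda>(v, i). v \<in> S \<and> i mod 3 < (2::nat))"
  show ?thesis unfolding lift_realizable_def
  proof (intro exI conjI)
    show "3 * m \<ge> 1" using m by simp
    show "\<forall>e\<in>E. bij_betw (pi e) {..<3 * m} {..<3 * m}"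
      unfolding pi_def using blk_bij h3 by blast
    show "lift_codeword C E (3 * m) pi x"
      unfolding lift_codeword_def
    proof (intro ballI allI impI)
      fix c j assume c: "c \<in> C" and j: "j < 3 * m"
      have "{(v, i). (v, c) \<in> E \<and> i < 3 * m \<and> pi (v, c) i = j \<and> x (v, i)}
         = {(v, i). v \<in> N c \<and> i < 3 * m \<and> 3 * (i div 3) + P3 (hole v c) (i mod 3) = j \<and> i mod 3 < 2}"
        unfolding pi_def x_def N_def by auto
      also have "card \<dots> = card {v \<in> N c. hole v c \<noteq> j mod 3}"
        by (rule blk_count[OF h3 j])
      finally have eq: "card {(v, i). (v, c) \<in> E \<and> i < 3 * m \<and> pi (v, c) i = j \<and> x (v, i)}
          = card {v \<in> N c. hole v c \<noteq> j mod 3}" .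
      have "even (card {v \<in> N c. hole v c \<noteq> j mod 3})"
      proof (cases "odd (card (N c))")
        case False
        then have "{v \<in> N c. hole v c \<noteq> j mod 3} = (if j mod 3 = 2 then {} else N c)"
          unfolding hole_def by auto
        then show ?thesis using False by simp
      next
        case True
        define a where "a = fst (ab c)"
        define b where "b = snd (ab c)"
        have ab: "a \<in> N c" "b \<in> N c" "a \<noteq> b" using abp[OF True] unfolding a_def b_def by auto
        have hv: "hole v c = (if v = a then 0 else if v = b then 1 else 2)" for v
          unfolding hole_def a_def b_def using True by simp
        have "j mod 3 = 0 \<or> j mod 3 = 1 \<or> j mod 3 = 2" by auto
        then show ?thesis
        proof (elim disjE)
          assume j0: "j mod 3 = 0"
          then have "{v \<in> N c. hole v c \<noteq> j mod 3} = N c - {a}" using hv by auto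
          then show ?thesis using True ab finN by (simp add: card_Diff_singleton)
        next
          assume j1: "j mod 3 = 1"
          then have "{v \<in> N c. hole v c \<noteq> j mod 3} = N c - {b}" using hv ab by auto
          then show ?thesis using True ab finN by (simp add: card_Diff_singleton)
        next
          assume j2: "j mod 3 = 2"
          then have "{v \<in> N c. hole v c \<noteq> j mod 3} = {a, b}" using hv ab by auto
          then show ?thesis using ab by simp
        qed
      qed
      then show "even (card {(v, i). (v, c) \<in> E \<and> i < 3 * m \<and> pi (v, c) i = j \<and> x (v, i)})"
        using eq by simp
    qed
    show "\<forall>v. (if v \<in> S then 2 * m else 0) = (if v \<in> V then card {i. i < 3 * m \<and> x (v, i)} else 0)"
      using SV card_mod3[of m] unfolding x_def by auto
  qed
qed

lemma lr_out: "lift_realizable V C E q \<Longrightarrow> v \<notin> V \<Longrightarrow> q v = 0"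
  unfolding lift_realizable_def by auto

lemma part_support:
  assumes tg: "tanner_graph V C E" and ms: "minimal_stopping_set V C E S"
    and lr: "lift_realizable V C E q" and nz: "q \<noteq> (\<lambda>_. 0)"
    and le: "\<forall>v. v \<notin> S \<longrightarrow> q v = 0"
  shows "support V q = S"
proof -
  have st: "stopping_set V C E (support V q)" by (rule support_stopping[OF tg lr nz])
  have "support V q \<subseteq> S" using le unfolding support_def by auto
  then show ?thesis using ms st unfolding minimal_stopping_set_def by blast
qed

lemma sum_two:
  assumes "length ps \<ge> 2"
  obtains q1 q2 rest where "ps = q1 # q2 # rest"
  using assms by (cases ps; cases "tl ps") auto

lemma le_sum_list_map: "(q :: 'a \<Rightarrow> nat) \<in> set ps \<Longrightarrow> q v \<le> sum_list (map (\<lambda>q. q v) ps)"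
  by (induction ps) (auto intro: trans_le_add2)

lemma main_char:
  assumes tg: "tanner_graph V C E" and ms: "minimal_stopping_set V C E S"
    and nt: "\<not> property_Theta C E S"
    and irr: "irreducible_pcw V C E p" and sp: "support V p = S"
  shows "\<exists>k\<ge>1. p = (\<lambda>v. if v \<in> S then k else 0) \<and> Max (p ` V) = k"
proof -
  have st: "stopping_set V C E S" using ms unfolding minimal_stopping_set_def by auto
  have SV: "S \<subseteq> V" and Sne: "S \<noteq> {}" using st unfolding stopping_set_def by auto
  have finV: "finite V" using tg unfolding tanner_graph_def by auto
  have lr: "lift_realizable V C E p" using irr unfolding irreducible_pcw_def by auto
  obtain u where u: "u \<in> S" using Sne by auto
  define k where "k = p u"
  have const: "\<forall>w\<in>S. p w = k"
  proof
    fix w assume "w \<in> S"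
    show "p w = k" unfolding k_def by (rule const_on_S[OF tg lr _ nt \<open>w \<in> S\<close> u]) (simp add: sp)
  qed
  have "u \<in> support V p" using sp u by simp
  then have k1: "k \<ge> 1" unfolding support_def k_def by simp
  have peq: "p = (\<lambda>v. if v \<in> S then k else 0)"
  proof
    fix v show "p v = (if v \<in> S then k else 0)"
    proof (cases "v \<in> S")
      case True then show ?thesis using const by auto
    next
      case False
      show ?thesis
      proof (cases "v \<in> V")
        case True
        then have "p v = 0" using False sp unfolding support_def by blast
        then show ?thesis using False by simp
      next
        case nV: False
        show ?thesis using lr_out[OF lr nV] False by simp
      qed
    qed
  qed
  have "Max (p ` V) = k"
  proof (rule Max_eqI)
    show "finite (p ` V)" using finV by auto
    show "y \<le> k" if "y \<in> p ` V" for y using that by (subst (asm) peq) auto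
    have "p u = k" using const u by blast
    then show "k \<in> p ` V" using u SV by blast
  qed
  then show ?thesis using peq k1 by auto
qed

theorem lemma6:
  fixes V :: "'v set" and C :: "'c set" and E :: "('v \<times> 'c) set" and S :: "'v set"
  assumes "tanner_graph V C E"
    and "minimal_stopping_set V C E S"
    and "\<not> property_Theta C E S"
  shows "finite (max_components V C E S) \<and> max_components V C E S \<noteq> {}
         \<and> (t_S V C E S = 1 \<or> t_S V C E S = 2)"
proof -
  note tg = assms(1) and ms = assms(2) and nt = assms(3)
  have st: "stopping_set V C E S" using ms unfolding minimal_stopping_set_def by auto
  have SV: "S \<subseteq> V" and Sne: "S \<noteq> {}" using st unfolding stopping_set_def by auto
  obtain u where u: "u \<in> S" using Sne by auto
  define P where "P k = (\<lambda>v. if v \<in> S then k else (0::nat))" for k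
  have Pnz: "P k \<noteq> (\<lambda>_. 0)" if "k \<ge> 1" for k
  proof
    assume "P k = (\<lambda>_. 0)"
    then have "P k u = 0" by simp
    then show False using u that unfolding P_def by simp
  qed
  have Psum: "P k = (\<lambda>v. sum_list (map (\<lambda>q. q v) [P a, P b]))" if "k = a + b" for k a b
    using that unfolding P_def by auto
  have Psupp: "support V (P k) = S" if "k \<ge> 1" for k
    using SV that unfolding support_def P_def by auto
  have parts: "support V q = S \<and> q u \<le> P k u" if "q \<in> set ps" "lift_realizable V C E q" "q \<noteq> (\<lambda>_. 0)"
      "P k = (\<lambda>v. sum_list (map (\<lambda>q. q v) ps))" for q ps k
  proof -
    have le: "q v \<le> P k v" for v using le_sum_list_map[OF that(1), of v] that(4) by metis
    have "\<forall>v. v \<notin> S \<longrightarrow> q v = 0" using le unfolding P_def by (metis le_zero_eq)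
    then show ?thesis using part_support[OF tg ms that(2,3)] le by auto
  qed
  have Mk: "max_components V C E S = {k0}"
    if irr0: "irreducible_pcw V C E (P k0)" and k01: "k0 \<ge> 1"
      and only: "\<And>k. k \<ge> 1 \<Longrightarrow> irreducible_pcw V C E (P k) \<Longrightarrow> k = k0" for k0
  proof (intro equalityI subsetI)
    fix y assume "y \<in> max_components V C E S"
    then obtain p where p: "y = Max (p ` V)" "irreducible_pcw V C E p" "support V p = S"
      unfolding max_components_def by auto
    obtain k where k: "k \<ge> 1" "p = (\<lambda>v. if v \<in> S then k else 0)" "Max (p ` V) = k"
      using main_char[OF tg ms nt p(2,3)] by blast
    have "p = P k" using k(2) by (simp only: P_def)
    then have "k = k0" using only[OF k(1)] p(2) by simp
    then show "y \<in> {k0}" using p(1) k(3) by simp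
  next
    fix y assume "y \<in> {k0}"
    then have y: "y = k0" by simp
    obtain k where k: "k \<ge> 1" "P k0 = (\<lambda>v. if v \<in> S then k else 0)" "Max (P k0 ` V) = k"
      using main_char[OF tg ms nt irr0 Psupp[OF k01]] by blast
    have "P k0 u = k" using fun_cong[OF k(2), of u] u by simp
    moreover have "P k0 u = k0" using u unfolding P_def by simp
    ultimately have "Max (P k0 ` V) = k0" using k(3) by simp
    then show "y \<in> max_components V C E S" unfolding max_components_def
      using y irr0 Psupp[OF k01] by (intro CollectI exI[of _ "P k0"]) simp
  qed
  have "\<exists>k0\<in>{1, 2}. max_components V C E S = {k0}"
  proof (cases "\<forall>c\<in>C. even (card {v\<in>S. (v, c) \<in> E})")
    case True
    have lrP: "lift_realizable V C E (P m)" if "m \<ge> 1" for m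
      unfolding P_def by (rule real_even_const[OF tg SV True that])
    have irr1: "irreducible_pcw V C E (P 1)"
      unfolding irreducible_pcw_def
    proof (intro conjI notI)
      show "lift_realizable V C E (P 1)" using lrP by simp
      show "P 1 = (\<lambda>_. 0) \<Longrightarrow> False" using Pnz[of 1] by simp
      assume "\<exists>ps. 2 \<le> length ps \<and> (\<forall>q\<in>set ps. lift_realizable V C E q \<and> q \<noteq> (\<lambda>_. 0)) \<and>
              P 1 = (\<lambda>v. sum_list (map (\<lambda>q. q v) ps))"
      then obtain ps where ps: "2 \<le> length ps" "\<forall>q\<in>set ps. lift_realizable V C E q \<and> q \<noteq> (\<lambda>_. 0)"
        "P 1 = (\<lambda>v. sum_list (map (\<lambda>q. q v) ps))" by blast
      obtain q1 q2 rest where ps12: "ps = q1 # q2 # rest" using sum_two[OF ps(1)] by blast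
      have "support V q1 = S" "support V q2 = S" using parts[of _ ps] ps ps12 by auto
      then have "u \<in> support V q1" "u \<in> support V q2" using u by simp_all
      then have "q1 u \<ge> 1" "q2 u \<ge> 1" unfolding support_def by simp_all
      moreover have "P 1 u = q1 u + q2 u + sum_list (map (\<lambda>q. q u) rest)" using ps(3) ps12 by simp
      ultimately show False using u unfolding P_def by simp
    qed
    have "max_components V C E S = {1}"
    proof (rule Mk[OF irr1])
      fix k assume k: "k \<ge> 1" "irreducible_pcw V C E (P k)"
      show "k = 1"
      proof (rule ccontr)
        assume "k \<noteq> 1"
        then have "k = 1 + (k - 1)" "k - 1 \<ge> 1" using k by auto
        have "\<exists>ps. 2 \<le> length ps \<and> (\<forall>q\<in>set ps. lift_realizable V C E q \<and> q \<noteq> (\<lambda>_. 0)) \<and>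
              P k = (\<lambda>v. sum_list (map (\<lambda>q. q v) ps))"
          apply (rule exI[of _ "[P 1, P (k - 1)]"])
          using Psum[of k 1 "k - 1"] lrP[of 1] lrP[of "k - 1"] Pnz[of 1] Pnz[of "k - 1"] \<open>k = 1 + (k - 1)\<close> \<open>k - 1 \<ge> 1\<close>
          by simp
        then show False using k(2) unfolding irreducible_pcw_def by blast
      qed
    qed simp
    then show ?thesis by simp
  next
    case False
    then obtain c where c: "c \<in> C" "odd (card {v\<in>S. (v, c) \<in> E})" by auto
    have lrP: "lift_realizable V C E (P (2 * m))" if "m \<ge> 1" for m
      unfolding P_def by (rule real_two[OF tg st that])
    have evq: "even (q u) \<and> q u \<ge> 1" if "lift_realizable V C E q" "support V q = S" for q
    proof -
      have "\<forall>w\<in>S. q w = q u" using const_on_S[OF tg that(1) _ nt _ u] that(2) by auto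
      then have "even (q u)" using parity[OF tg that(1) _ SV _ c] that(2) by auto
      moreover have "q u \<ge> 1" using that(2) u unfolding support_def by auto
      ultimately show ?thesis by simp
    qed
    have irr2: "irreducible_pcw V C E (P 2)"
      unfolding irreducible_pcw_def
    proof (intro conjI notI)
      show "lift_realizable V C E (P 2)" using lrP[of 1] by simp
      show "P 2 = (\<lambda>_. 0) \<Longrightarrow> False" using Pnz[of 2] by simp
      assume "\<exists>ps. 2 \<le> length ps \<and> (\<forall>q\<in>set ps. lift_realizable V C E q \<and> q \<noteq> (\<lambda>_. 0)) \<and>
              P 2 = (\<lambda>v. sum_list (map (\<lambda>q. q v) ps))"
      then obtain ps where ps: "2 \<le> length ps" "\<forall>q\<in>set ps. lift_realizable V C E q \<and> q \<noteq> (\<lambda>_. 0)"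
        "P 2 = (\<lambda>v. sum_list (map (\<lambda>q. q v) ps))" by blast
      obtain q1 q2 rest where ps12: "ps = q1 # q2 # rest" using sum_two[OF ps(1)] by blast
      have "support V q1 = S" "support V q2 = S" using parts[of _ ps] ps ps12 by auto
      then have "even (q1 u) \<and> q1 u \<ge> 1" "even (q2 u) \<and> q2 u \<ge> 1" using evq ps ps12 by auto
      then have "q1 u \<ge> 2" "q2 u \<ge> 2" by (auto elim!: evenE)
      moreover have "P 2 u = q1 u + q2 u + sum_list (map (\<lambda>q. q u) rest)" using ps(3) ps12 by simp
      ultimately show False using u unfolding P_def by simp
    qed
    have "max_components V C E S = {2}"
    proof (rule Mk[OF irr2])
      fix k assume k: "k \<ge> 1" "irreducible_pcw V C E (P k)"
      have lrk: "lift_realizable V C E (P k)" using k unfolding irreducible_pcw_def by auto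
      have "even (P k u)" using evq[OF lrk Psupp[OF k(1)]] by simp
      then have ek: "even k" using u unfolding P_def by simp
      show "k = 2"
      proof (rule ccontr)
        assume "k \<noteq> 2"
        then have "k \<ge> 4" using ek k(1) by (auto elim!: evenE)
        obtain b where b: "k = 2 * b" using ek by (auto elim!: evenE)
        define m where "m = b - 1"
        have m: "k - 2 = 2 * m" "m \<ge> 1" using b \<open>k \<ge> 4\<close> unfolding m_def by auto
        then have "k = 2 + 2 * m" using \<open>k \<ge> 4\<close> by simp
        then have "\<exists>ps. 2 \<le> length ps \<and> (\<forall>q\<in>set ps. lift_realizable V C E q \<and> q \<noteq> (\<lambda>_. 0)) \<and>
              P k = (\<lambda>v. sum_list (map (\<lambda>q. q v) ps))"
          apply (intro exI[of _ "[P 2, P (2 * m)]"])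
          using Psum[of k 2 "2 * m"] lrP[of 1] lrP[of m] m Pnz[of 2] Pnz[of "2 * m"]
          by simp
        then show False using k(2) unfolding irreducible_pcw_def by blast
      qed
    qed simp
    then show ?thesis by simp
  qed
  then obtain k0 where k0: "k0 = 1 \<or> k0 = 2" "max_components V C E S = {k0}" by blast
  have "t_S V C E S = k0" unfolding t_S_def k0(2) by simp
  then show ?thesis using k0 by simp
qed

end
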